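(* Consider the random intersection graph $G(n,m,F)$ defined in the context, with $m=\lfloor\beta n^\alpha\rfloor$ and $p_i=\gamma W_i n^{-(1+\alpha)/2}\wedge 1$, and assume $F$ has finite mean. Let $i,j,k$ be three distinct vertices and let $\bar c^{(n)}_{i,j,k}=\bar{\mathbf P}_n(E_{ij}\mid E_{ik}\cap E_{jk})$. Then as $n\to\infty$: (a) if $\alpha<1$, $\bar c^{(n)}_{i,j,k}\to 1$ in probability; (b) if $\alpha=1$, $\bar c^{(n)}_{i,j,k}\to (1+\beta\gamma W_k)^{-1}$ in probability; (c) if $\alpha>1$, $\bar c^{(n)}_{i,j,k}\to 0$ in probability.
   Context: Model $G(n,m,F)$: fix constants $\alpha,\beta,\gamma>0$ and a probability distribution $F$ on $(0,\infty)$; if $F$ has finite mean it is assumed to have mean $1$. For a positive integer $n$ let $m=\lfloor\beta n^\alpha\rfloor$, let $\mathcal V=\{1,\dots,n\}$ (vertices, "individuals") and $\mathcal A$ a set of $m$ elements ("groups"). Let $W_1,\dots,W_n$ be i.i.d. with distribution $F$ and set $p_i=\gamma W_i n^{-(1+\alpha)/2}\wedge 1$. Conditionally on the weights, form a bipartite graph $B(n,m,F)$ on $\mathcal V\cup\mathcal A$ by including each edge between $i\in\mathcal V$ and $a\in\mathcal A$ independently with probability $p_i$. The graph $G(n,m,F)$ on $\mathcal V$ has an edge between distinct $i,j$ iff some $a\in\mathcal A$ is adjacent to both $i$ and $j$ in $B(n,m,F)$. The parameters $\alpha,\beta,\gamma,F$ do not depend on $n$. $\bar{\mathbf P}_n$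 denotes the law of $B(n,m,F)$ conditional on the weights $W_1,\dots,W_n$, and $E_{ij}$ is the event that $i$ and $j$ belong to a common group (equivalently, $\{i,j\}$ is an edge of $G(n,m,F)$). Thus $\bar c^{(n)}_{i,j,k}$ is a random variable (a function of the weights). *)

theory Defs
  imports "HOL-Probability.Probability"
begin

definition num_groups :: "real \<Rightarrow> real \<Rightarrow> nat \<Rightarrow> nat" where
  "num_groups \<alpha> \<beta> n = nat \<lfloor>\<beta> * real n powr \<alpha>\<rfloor>"

definition edge_prob :: "real \<Rightarrow> real \<Rightarrow> nat \<Rightarrow> real \<Rightarrow> real" where
  "edge_prob \<alpha> \<gamma> n w = min (\<gamma> * w * real n powr (-(1 + \<alpha>) / 2)) 1"

text \<open>Law of the bipartite graph B(n,m,F) given the weights (through the edge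
  probabilities p): vertices {1..n}, groups {0..<m}; a bipartite graph is the
  indicator function of its edge set (pairs (vertex, group)).\<close>
definition bip_law :: "nat \<Rightarrow> nat \<Rightarrow> (nat \<Rightarrow> real) \<Rightarrow> (nat \<times> nat \<Rightarrow> bool) pmf" where
  "bip_law n m p = Pi_pmf ({1..n} \<times> {..<m}) False (\<lambda>(i, a). bernoulli_pmf (p i))"

definition common_group :: "nat \<Rightarrow> nat \<Rightarrow> nat \<Rightarrow> (nat \<times> nat \<Rightarrow> bool) set" where
  "common_group m i j = {B. \<exists>a<m. B (i, a) \<and> B (j, a)}"

definition cond_clust :: "nat \<Rightarrow> nat \<Rightarrow> (nat \<Rightarrow> real) \<Rightarrow> nat \<Rightarrow> nat \<Rightarrow> nat \<Rightarrow> real" where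
  "cond_clust n m p i j k =
     measure_pmf.prob (bip_law n m p)
        (common_group m i j \<inter> (common_group m i k \<inter> common_group m j k))
     / measure_pmf.prob (bip_law n m p) (common_group m i k \<inter> common_group m j k)"

definition conv_in_prob :: "'a measure \<Rightarrow> (nat \<Rightarrow> 'a \<Rightarrow> real) \<Rightarrow> ('a \<Rightarrow> real) \<Rightarrow> bool" where
  "conv_in_prob M X L \<longleftrightarrow>
     (\<forall>n. X n \<in> borel_measurable M) \<and> L \<in> borel_measurable M \<and>
     (\<forall>\<epsilon>>0. (\<lambda>n. measure M {\<omega> \<in> space M. \<bar>X n \<omega> - L \<omega>\<bar> > \<epsilon>}) \<longlonglongrightarrow> 0)"

end

theory Submission
  imports Defs "HOL-Real_Asymp.Real_Asymp"
begin


lemma cyl: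
  fixes St Sf :: "(nat\<times>nat) set"
  assumes fin: "finite St" "finite Sf" and disj: "St \<inter> Sf = {}"
    and sub: "St \<union> Sf \<subseteq> {1..n}\<times>{..<m}"
    and pr: "\<And>x. x \<in> St \<union> Sf \<Longrightarrow> 0 \<le> p (fst x) \<and> p (fst x) \<le> 1"
  shows "measure_pmf.prob (bip_law n m p) {B. (\<forall>x\<in>St. B x) \<and> (\<forall>x\<in>Sf. \<not> B x)}
       = (\<Prod>x\<in>St. p (fst x)) * (\<Prod>x\<in>Sf. 1 - p (fst x))"
proof -
  let ?A = "{1..n}\<times>{..<m}"
  define Bs where "Bs x = (if x \<in> St then {True} else if x \<in> Sf then {False} else UNIV)" for x
  define f where "f x = (if x\<in>St then p (fst x) else if x\<in>Sf then 1 - p (fst x) else 1)" for x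
  have eq: "{B. (\<forall>x\<in>St. B x) \<and> (\<forall>x\<in>Sf. \<not> B x)} = Pi ?A Bs"
  proof (intro set_eqI iffI)
    fix B assume "B \<in> {B. (\<forall>x\<in>St. B x) \<and> (\<forall>x\<in>Sf. \<not> B x)}"
    then show "B \<in> Pi ?A Bs" by (auto simp: Bs_def Pi_def)
  next
    fix B assume B: "B \<in> Pi ?A Bs"
    have "B x" if "x \<in> St" for x
    proof -
      have "x \<in> ?A" using sub that by auto
      then have "B x \<in> Bs x" using B by (auto simp: Pi_def)
      then show ?thesis using that by (simp add: Bs_def)
    qed
    moreover have "\<not> B x" if "x \<in> Sf" for x
    proof -
      have "x \<in> ?A" using sub that by auto
      then have "B x \<in> Bs x" using B by (auto simp: Pi_def)
      moreover have "x \<notin> St" using that disj by auto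
      ultimately show ?thesis using that by (simp add: Bs_def)
    qed
    ultimately show "B \<in> {B. (\<forall>x\<in>St. B x) \<and> (\<forall>x\<in>Sf. \<not> B x)}" by auto
  qed
  have "measure_pmf.prob (bip_law n m p) {B. (\<forall>x\<in>St. B x) \<and> (\<forall>x\<in>Sf. \<not> B x)}
      = (\<Prod>x\<in>?A. measure_pmf.prob ((\<lambda>(i, a). bernoulli_pmf (p i)) x) (Bs x))"
    unfolding eq bip_law_def by (rule measure_Pi_pmf_Pi) simp
  also have "\<dots> = (\<Prod>x\<in>?A. f x)"
  proof (rule prod.cong[OF refl])
    fix x assume "x \<in> ?A"
    show "measure_pmf.prob ((\<lambda>(i, a). bernoulli_pmf (p i)) x) (Bs x) = f x"
      using pr[of x] disj
      by (cases x) (auto simp: Bs_def f_def measure_pmf_single)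
  qed
  also have "\<dots> = (\<Prod>x\<in>St \<union> Sf. f x)"
    by (rule prod.mono_neutral_right) (use sub in \<open>auto simp: f_def\<close>)
  also have "\<dots> = (\<Prod>x\<in>St. f x) * (\<Prod>x\<in>Sf. f x)"
    by (rule prod.union_disjoint) (use fin disj in auto)
  also have "\<dots> = (\<Prod>x\<in>St. p (fst x)) * (\<Prod>x\<in>Sf. 1 - p (fst x))"
    using disj by (auto simp: f_def intro!: arg_cong2[where f="(*)"] prod.cong)
  finally show ?thesis .
qed

lemma pmf_union_bound:
  "finite I \<Longrightarrow> measure_pmf.prob Q (\<Union>x\<in>I. E x) \<le> (\<Sum>x\<in>I. measure_pmf.prob Q (E x))"
  by (rule measure_pmf.finite_measure_subadditive_finite) auto

lemma pmf_disj_union: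
  "finite I \<Longrightarrow> disjoint_family_on E I \<Longrightarrow> measure_pmf.prob Q (\<Union>x\<in>I. E x) = (\<Sum>x\<in>I. measure_pmf.prob Q (E x))"
  by (rule measure_pmf.finite_measure_finite_Union) auto

lemma pmf_diff_lb:
  assumes "finite I"
  shows "measure_pmf.prob Q X - (\<Sum>f\<in>I. measure_pmf.prob Q (X \<inter> Y f)) \<le> measure_pmf.prob Q (X - (\<Union>f\<in>I. Y f))"
proof -
  have "X \<subseteq> (X - (\<Union>f\<in>I. Y f)) \<union> (\<Union>f\<in>I. X \<inter> Y f)" by auto
  then have "measure_pmf.prob Q X \<le> measure_pmf.prob Q ((X - (\<Union>f\<in>I. Y f)) \<union> (\<Union>f\<in>I. X \<inter> Y f))"
    by (rule measure_pmf.finite_measure_mono) auto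
  also have "\<dots> \<le> measure_pmf.prob Q (X - (\<Union>f\<in>I. Y f)) + measure_pmf.prob Q (\<Union>f\<in>I. X \<inter> Y f)"
    by (rule measure_Un_le) auto
  also have "\<dots> \<le> measure_pmf.prob Q (X - (\<Union>f\<in>I. Y f)) + (\<Sum>f\<in>I. measure_pmf.prob Q (X \<inter> Y f))"
    using pmf_union_bound[OF assms, of Q "\<lambda>f. X \<inter> Y f"] by linarith
  finally show ?thesis by simp
qed

locale rig =
  fixes n m :: nat and p :: "nat \<Rightarrow> real" and i j k :: nat
  assumes ijk: "i \<in> {1..n}" "j \<in> {1..n}" "k \<in> {1..n}" "i \<noteq> j" "i \<noteq> k" "j \<noteq> k"
    and pr: "0 \<le> p i" "p i \<le> 1" "0 \<le> p j" "p j \<le> 1" "0 \<le> p k" "p k \<le> 1"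
begin

abbreviation "P \<equiv> measure_pmf.prob (bip_law n m p)"
abbreviation "a \<equiv> p i"
abbreviation "b \<equiv> p j"
abbreviation "c \<equiv> p k"

definition "Tg (g::nat) = {B. B (i, g) \<and> B (j, g) \<and> B (k, g)}"
definition "T = {B. \<exists>g<m. B (i, g) \<and> B (j, g) \<and> B (k, g)}"

lemma cylT:
  assumes "St \<subseteq> {i,j,k} \<times> {..<m}" "Sf \<subseteq> {i,j,k} \<times> {..<m}" "finite St" "finite Sf" "St \<inter> Sf = {}"
  shows "P {B. (\<forall>x\<in>St. B x) \<and> (\<forall>x\<in>Sf. \<not> B x)} = (\<Prod>x\<in>St. p (fst x)) * (\<Prod>x\<in>Sf. 1 - p (fst x))"
  by (rule cyl) (use assms ijk pr in auto)

lemma P_Tg: "g < m \<Longrightarrow> P (Tg g) = a * b * c"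
proof -
  assume g: "g < m"
  have "Tg g = {B. (\<forall>x\<in>{(i,g),(j,g),(k,g)}. B x) \<and> (\<forall>x\<in>{}. \<not> B x)}" by (auto simp: Tg_def)
  also have "P \<dots> = a * b * c" by (subst cylT) (use g ijk in auto)
  finally show ?thesis .
qed

lemma P_Tg2: "g < m \<Longrightarrow> f < m \<Longrightarrow> f \<noteq> g \<Longrightarrow> P (Tg g \<inter> Tg f) = (a * b * c)^2"
proof -
  assume g: "g < m" "f < m" "f \<noteq> g"
  have "Tg g \<inter> Tg f = {B. (\<forall>x\<in>{(i,g),(j,g),(k,g),(i,f),(j,f),(k,f)}. B x) \<and> (\<forall>x\<in>{}. \<not> B x)}" by (auto simp: Tg_def)
  also have "P \<dots> = (a * b * c)^2" by (subst cylT) (use g ijk in \<open>auto simp: power2_eq_square\<close>)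
  finally show ?thesis .
qed

lemma T_eq: "T = (\<Union>g\<in>{..<m}. Tg g)" by (auto simp: T_def Tg_def)

lemma P_T_upper: "P T \<le> m * (a * b * c)"
proof -
  have "P T \<le> (\<Sum>g\<in>{..<m}. P (Tg g))" unfolding T_eq by (rule pmf_union_bound) auto
  also have "\<dots> = m * (a * b * c)" by (simp add: P_Tg)
  finally show ?thesis .
qed

lemma P_T_lower: "m * (a * b * c) * (1 - m * (a * b * c)) \<le> P T"
proof -
  define T' where "T' g = Tg g - (\<Union>f\<in>{..<m}-{g}. Tg f)" for g
  have disj: "disjoint_family_on T' {..<m}"
    unfolding disjoint_family_on_def T'_def by blast
  have sub: "(\<Union>g\<in>{..<m}. T' g) \<subseteq> T" unfolding T_eq T'_def by blast
  have lb: "a * b * c - m * (a * b * c)^2 \<le> P (T' g)" if g: "g < m" for g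
  proof -
    have "a * b * c - m * (a * b * c)^2 \<le> P (Tg g) - (\<Sum>f\<in>{..<m}-{g}. P (Tg g \<inter> Tg f))"
    proof -
      have "(\<Sum>f\<in>{..<m}-{g}. P (Tg g \<inter> Tg f)) = (\<Sum>f\<in>{..<m}-{g}. (a * b * c)^2)"
        by (intro sum.cong) (auto simp: P_Tg2 g)
      also have "\<dots> \<le> m * (a * b * c)^2"
        using card_Diff1_le[of "{..<m}" g] by (simp add: mult_right_mono)
      finally show ?thesis using P_Tg[OF g] by simp
    qed
    also have "\<dots> \<le> P (T' g)" unfolding T'_def by (rule pmf_diff_lb) auto
    finally show ?thesis .
  qed
  have "m * (a * b * c) * (1 - m * (a * b * c)) \<le> m * (a * b * c - m * (a * b * c)^2)"
  proof -
    have "0 \<le> (a*b*c)" using pr by simp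
    then have "m * (a*b*c) * (m * (a*b*c)) \<ge> m * (m * (a*b*c)^2)" by (simp add: power2_eq_square)
    then show ?thesis by (simp add: algebra_simps)
  qed
  also have "\<dots> = (\<Sum>g\<in>{..<m}. a * b * c - m * (a * b * c)^2)" by simp
  also have "\<dots> \<le> (\<Sum>g\<in>{..<m}. P (T' g))" by (intro sum_mono lb) auto
  also have "\<dots> = P (\<Union>g\<in>{..<m}. T' g)" by (rule pmf_disj_union[symmetric]) (use disj in auto)
  also have "\<dots> \<le> P T" by (rule measure_pmf.finite_measure_mono[OF sub]) auto
  finally show ?thesis .
qed

definition "Bev = common_group m i k \<inter> common_group m j k"
definition "Aev = common_group m i j \<inter> (common_group m i k \<inter> common_group m j k)"

definition "E5 (g::nat) h = {B. B (i, g) \<and> B (k, g) \<and> B (j, h) \<and> B (k, h)}"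
definition "Ipairs = {(g,h). g < m \<and> h < m \<and> g \<noteq> h}"

lemma Ipairs_sub: "Ipairs \<subseteq> {..<m} \<times> {..<m}" by (auto simp: Ipairs_def)
lemma finite_Ipairs: "finite Ipairs" by (rule finite_subset[OF Ipairs_sub]) auto
lemma card_Ipairs: "card Ipairs = m * (m - 1)"
proof -
  have "Ipairs = Sigma {..<m} (\<lambda>g. {..<m} - {g})" by (auto simp: Ipairs_def)
  then have "card Ipairs = (\<Sum>g\<in>{..<m}. card ({..<m} - {g}))" by (simp add: card_SigmaI)
  also have "\<dots> = (\<Sum>g\<in>{..<m}. m - 1)" by (intro sum.cong) auto
  finally show ?thesis by simp
qed

lemma P_E5: "(g,h) \<in> Ipairs \<Longrightarrow> P (E5 g h) = a * b * c^2"
proof -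
  assume gh: "(g,h) \<in> Ipairs"
  have "E5 g h = {B. (\<forall>x\<in>{(i,g),(k,g),(j,h),(k,h)}. B x) \<and> (\<forall>x\<in>{}. \<not> B x)}" by (auto simp: E5_def)
  also have "P \<dots> = a * b * c^2" by (subst cylT) (use gh ijk in \<open>auto simp: Ipairs_def power2_eq_square\<close>)
  finally show ?thesis .
qed

lemma P_BT_upper: "P (Bev - T) \<le> m^2 * (a * b * c^2)"
proof -
  have "Bev - T \<subseteq> (\<Union>x\<in>Ipairs. E5 (fst x) (snd x))"
  proof
    fix B assume "B \<in> Bev - T"
    then obtain g h where g: "g < m" "B (i,g)" "B (k,g)" and h: "h < m" "B (j,h)" "B (k,h)"
      and nT: "B \<notin> T" by (auto simp: Bev_def common_group_def)
    have "g \<noteq> h" using nT g h by (auto simp: T_def)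
    then show "B \<in> (\<Union>x\<in>Ipairs. E5 (fst x) (snd x))" using g h
      by (auto simp: Ipairs_def E5_def intro!: bexI[of _ "(g,h)"])
  qed
  then have "P (Bev - T) \<le> P (\<Union>x\<in>Ipairs. E5 (fst x) (snd x))"
    by (rule measure_pmf.finite_measure_mono) auto
  also have "\<dots> \<le> (\<Sum>x\<in>Ipairs. P (E5 (fst x) (snd x)))" by (rule pmf_union_bound[OF finite_Ipairs])
  also have "\<dots> = (\<Sum>x\<in>Ipairs. a * b * c^2)" by (intro sum.cong) (auto simp: P_E5)
  also have "\<dots> = card Ipairs * (a * b * c^2)" by simp
  also have "\<dots> \<le> m^2 * (a * b * c^2)"
  proof -
    have "card Ipairs \<le> m * m" using card_Ipairs by simp
    then have "real (card Ipairs) \<le> real m * real m" by (metis of_nat_le_iff of_nat_mult)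
    then show ?thesis using pr by (intro mult_right_mono) (simp_all add: power2_eq_square)
  qed
  finally show ?thesis .
qed

definition "E3 (g::nat) h = {B. B (i, g) \<and> B (k, g) \<and> \<not> B (j, g) \<and> B (j, h) \<and> B (k, h) \<and> \<not> B (i, h)}"
definition "Pr y = {B. B (fst (snd y), fst y) \<and> B (snd (snd y), fst y)}"
definition "J g h = ({..<m} - {g,h}) \<times> {(i,j),(i,k),(j,k)}"
definition "D g h = E3 g h - (\<Union>y\<in>J g h. Pr y)"

lemma P_E3: "(g,h) \<in> Ipairs \<Longrightarrow> P (E3 g h) = a * b * c^2 * (1 - a) * (1 - b)"
proof -
  assume gh: "(g,h) \<in> Ipairs"
  have "E3 g h = {B. (\<forall>x\<in>{(i,g),(k,g),(j,h),(k,h)}. B x) \<and> (\<forall>x\<in>{(j,g),(i,h)}. \<not> B x)}" by (auto simp: E3_def)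
  also have "P \<dots> = a * b * c^2 * (1 - a) * (1 - b)" by (subst cylT) (use gh ijk in \<open>auto simp: Ipairs_def power2_eq_square\<close>)
  finally show ?thesis .
qed

lemma P_E3_Pr:
  assumes gh: "(g,h) \<in> Ipairs" and y: "y \<in> J g h"
  shows "P (E3 g h \<inter> Pr y) = a * b * c^2 * (1 - a) * (1 - b) * (p (fst (snd y)) * p (snd (snd y)))"
proof -
  obtain f u w where yy: "y = (f,u,w)" by (cases y) auto
  have f: "f < m" "f \<noteq> g" "f \<noteq> h" and uw: "(u,w) \<in> {(i,j),(i,k),(j,k)}" using y by (auto simp: J_def yy)
  have "E3 g h \<inter> Pr y = {B. (\<forall>x\<in>{(i,g),(k,g),(j,h),(k,h),(u,f),(w,f)}. B x) \<and> (\<forall>x\<in>{(j,g),(i,h)}. \<not> B x)}"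
    by (auto simp: E3_def Pr_def yy)
  also have "P \<dots> = a * b * c^2 * (1 - a) * (1 - b) * (p u * p w)"
    using uw
  proof (elim insertE emptyE)
    assume "(u,w) = (i,j)"
    then show ?thesis by (subst cylT) (use gh ijk f in \<open>auto simp: Ipairs_def power2_eq_square\<close>)
  next
    assume "(u,w) = (i,k)"
    then show ?thesis by (subst cylT) (use gh ijk f in \<open>auto simp: Ipairs_def power2_eq_square\<close>)
  next
    assume "(u,w) = (j,k)"
    then show ?thesis by (subst cylT) (use gh ijk f in \<open>auto simp: Ipairs_def power2_eq_square\<close>)
  qed
  finally show ?thesis by (simp add: yy)
qed

lemma P_D_lower:
  assumes gh: "(g,h) \<in> Ipairs"
  shows "a * b * c^2 * (1 - a) * (1 - b) * (1 - m * (a*b + a*c + b*c)) \<le> P (D g h)"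
proof -
  define q where "q = a * b * c^2 * (1 - a) * (1 - b)"
  have q0: "0 \<le> q" using pr by (simp add: q_def)
  have finJ: "finite (J g h)" by (simp add: J_def)
  have "(\<Sum>y\<in>J g h. P (E3 g h \<inter> Pr y)) = (\<Sum>y\<in>J g h. q * (p (fst (snd y)) * p (snd (snd y))))"
    by (intro sum.cong) (auto simp: P_E3_Pr[OF gh] q_def)
  also have "\<dots> = (\<Sum>f\<in>{..<m} - {g,h}. \<Sum>uw\<in>{(i,j),(i,k),(j,k)}. q * (p (fst uw) * p (snd uw)))"
    unfolding J_def by (subst sum.cartesian_product) (rule sum.cong, auto)
  also have "\<dots> = (\<Sum>f\<in>{..<m} - {g,h}. q * (a*b + a*c + b*c))"
    by (intro sum.cong) (use ijk in \<open>auto simp: algebra_simps\<close>)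
  also have "\<dots> = card ({..<m} - {g,h}) * (q * (a*b + a*c + b*c))" by simp
  also have "\<dots> \<le> m * (q * (a*b + a*c + b*c))"
  proof (rule mult_right_mono)
    have "card ({..<m} - {g,h}) \<le> card {..<m}" by (rule card_mono) auto
    then show "real (card ({..<m} - {g,h})) \<le> real m" by simp
    show "0 \<le> q * (a*b + a*c + b*c)" using q0 pr by simp
  qed
  finally have s: "(\<Sum>y\<in>J g h. P (E3 g h \<inter> Pr y)) \<le> m * (q * (a*b + a*c + b*c))" .
  have "q * (1 - m * (a*b + a*c + b*c)) = P (E3 g h) - m * (q * (a*b + a*c + b*c))"
    using P_E3[OF gh] by (simp add: q_def algebra_simps)
  also have "\<dots> \<le> P (E3 g h) - (\<Sum>y\<in>J g h. P (E3 g h \<inter> Pr y))" using s by simp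
  also have "\<dots> \<le> P (D g h)" unfolding D_def by (rule pmf_diff_lb[OF finJ])
  finally show ?thesis by (simp add: q_def)
qed

lemma D_disj: "disjoint_family_on (\<lambda>x. D (fst x) (snd x)) Ipairs"
proof (unfold disjoint_family_on_def, intro ballI impI)
  fix x y assume x: "x \<in> Ipairs" and y: "y \<in> Ipairs" and xy: "x \<noteq> y"
  obtain g h where xx: "x = (g,h)" by (cases x)
  obtain g' h' where yy: "y = (g',h')" by (cases y)
  show "D (fst x) (snd x) \<inter> D (fst y) (snd y) = {}"
  proof (rule ccontr)
    assume "D (fst x) (snd x) \<inter> D (fst y) (snd y) \<noteq> {}"
    then obtain B where B1: "B \<in> D g h" and B2: "B \<in> D g' h'" using xx yy by auto
    have gm: "g' < m" "h' < m" "h < m" "g < m" using x y xx yy by (auto simp: Ipairs_def)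
    show False
    proof (cases "g = g'")
      case False
      have "g' \<noteq> h" using B1 B2 by (auto simp: D_def E3_def)
      then have "(g',i,k) \<in> J g h" using False gm by (auto simp: J_def)
      then show False using B1 B2 by (auto simp: D_def E3_def Pr_def)
    next
      case True
      then have hh: "h \<noteq> h'" using xy xx yy by auto
      have "h' \<noteq> g" using B1 B2 by (auto simp: D_def E3_def)
      then have "(h',j,k) \<in> J g h" using hh gm by (auto simp: J_def)
      then show False using B1 B2 by (auto simp: D_def E3_def Pr_def)
    qed
  qed
qed

lemma D_sub: "(\<Union>x\<in>Ipairs. D (fst x) (snd x)) \<subseteq> Bev - T"
proof
  fix B assume "B \<in> (\<Union>x\<in>Ipairs. D (fst x) (snd x))"
  then obtain g h where gh: "(g,h) \<in> Ipairs" and B: "B \<in> D g h" by auto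
  have gm: "g < m" "h < m" using gh by (auto simp: Ipairs_def)
  have "B \<in> Bev" using B gm by (auto simp: D_def E3_def Bev_def common_group_def)
  moreover have "B \<notin> T"
  proof
    assume "B \<in> T"
    then obtain f where f: "f < m" "B (i,f)" "B (j,f)" "B (k,f)" by (auto simp: T_def)
    have "f \<noteq> g" "f \<noteq> h" using f B by (auto simp: D_def E3_def)
    then have "(f,i,j) \<in> J g h" using f by (auto simp: J_def)
    then show False using B f by (auto simp: D_def Pr_def)
  qed
  ultimately show "B \<in> Bev - T" by auto
qed

lemma P_BT_lower: "m * (m - 1) * (a * b * c^2 * (1 - a) * (1 - b) * (1 - m * (a*b + a*c + b*c))) \<le> P (Bev - T)"
proof -
  have "m * (m - 1) * (a * b * c^2 * (1 - a) * (1 - b) * (1 - m * (a*b + a*c + b*c)))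
      = (\<Sum>x\<in>Ipairs. a * b * c^2 * (1 - a) * (1 - b) * (1 - m * (a*b + a*c + b*c)))"
    by (simp add: card_Ipairs of_nat_diff)
  also have "\<dots> \<le> (\<Sum>x\<in>Ipairs. P (D (fst x) (snd x)))"
    by (intro sum_mono P_D_lower) auto
  also have "\<dots> = P (\<Union>x\<in>Ipairs. D (fst x) (snd x))"
    by (rule pmf_disj_union[symmetric]) (use D_disj finite_Ipairs in auto)
  also have "\<dots> \<le> P (Bev - T)" by (rule measure_pmf.finite_measure_mono[OF D_sub]) auto
  finally show ?thesis .
qed

definition "E6 (x::nat\<times>nat\<times>nat) = {B. B (i, fst x) \<and> B (j, fst x) \<and> B (i, fst (snd x)) \<and> B (k, fst (snd x))
   \<and> B (j, snd (snd x)) \<and> B (k, snd (snd x))}"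
definition "Itrip = {x::nat\<times>nat\<times>nat. fst x < m \<and> fst (snd x) < m \<and> snd (snd x) < m \<and>
   fst x \<noteq> fst (snd x) \<and> fst x \<noteq> snd (snd x) \<and> fst (snd x) \<noteq> snd (snd x)}"

lemma Itrip_sub: "Itrip \<subseteq> {..<m} \<times> {..<m} \<times> {..<m}" by (auto simp: Itrip_def)

lemma P_E6: "x \<in> Itrip \<Longrightarrow> P (E6 x) = a^2 * b^2 * c^2"
proof -
  assume x: "x \<in> Itrip"
  obtain g h l where xx: "x = (g,h,l)" by (cases x) auto
  have "E6 x = {B. (\<forall>y\<in>{(i,g),(j,g),(i,h),(k,h),(j,l),(k,l)}. B y) \<and> (\<forall>y\<in>{}. \<not> B y)}" by (auto simp: E6_def xx)
  also have "P \<dots> = a^2 * b^2 * c^2" by (subst cylT) (use x ijk in \<open>auto simp: Itrip_def xx power2_eq_square\<close>)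
  finally show ?thesis .
qed

lemma P_AT_upper: "P (Aev - T) \<le> m^3 * (a^2 * b^2 * c^2)"
proof -
  have fin: "finite Itrip" by (rule finite_subset[OF Itrip_sub]) auto
  have "Aev - T \<subseteq> (\<Union>x\<in>Itrip. E6 x)"
  proof
    fix B assume "B \<in> Aev - T"
    then obtain g h l where g: "g < m" "B (i,g)" "B (j,g)" and h: "h < m" "B (i,h)" "B (k,h)"
      and l: "l < m" "B (j,l)" "B (k,l)"
      and nT: "B \<notin> T" by (auto simp: Aev_def common_group_def)
    have "g \<noteq> h" "g \<noteq> l" "h \<noteq> l" using nT g h l by (auto simp: T_def)
    then show "B \<in> (\<Union>x\<in>Itrip. E6 x)" using g h l
      by (auto simp: Itrip_def E6_def intro!: bexI[of _ "(g,h,l)"])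
  qed
  then have "P (Aev - T) \<le> P (\<Union>x\<in>Itrip. E6 x)"
    by (rule measure_pmf.finite_measure_mono) auto
  also have "\<dots> \<le> (\<Sum>x\<in>Itrip. P (E6 x))" by (rule pmf_union_bound[OF fin])
  also have "\<dots> = (\<Sum>x\<in>Itrip. a^2 * b^2 * c^2)" by (intro sum.cong) (auto simp: P_E6)
  also have "\<dots> = card Itrip * (a^2 * b^2 * c^2)" by simp
  also have "\<dots> \<le> m^3 * (a^2 * b^2 * c^2)"
  proof -
    have "card Itrip \<le> card ({..<m} \<times> {..<m} \<times> {..<m})" by (rule card_mono[OF _ Itrip_sub]) auto
    then have "card Itrip \<le> m * (m * m)" by (simp add: card_cartesian_product)
    then have "real (card Itrip) \<le> real m * (real m * real m)" by (metis of_nat_le_iff of_nat_mult)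
    then show ?thesis using pr by (intro mult_right_mono) (simp_all add: power3_eq_cube)
  qed
  finally show ?thesis .
qed

lemma cond_eq: "cond_clust n m p i j k = (P T + P (Aev - T)) / (P T + P (Bev - T))"
proof -
  have TA: "T \<subseteq> Aev" by (auto simp: T_def Aev_def common_group_def)
  have TB: "T \<subseteq> Bev" by (auto simp: T_def Bev_def common_group_def)
  have "P Aev = P T + P (Aev - T)" using measure_pmf.finite_measure_Diff[OF _ _ TA] by simp
  moreover have "P Bev = P T + P (Bev - T)" using measure_pmf.finite_measure_Diff[OF _ _ TB] by simp
  ultimately show ?thesis by (simp add: cond_clust_def Aev_def Bev_def)
qed

lemma rig_bounds:
  assumes m1: "m \<ge> 1"
  shows "\<exists>PT PR PS. cond_clust n m p i j k = (PT + PR) / (PT + PS) \<and>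
    real m * a * b * c * (1 - real m * a * b * c) \<le> PT \<and> 0 \<le> PT \<and> PT \<le> real m * a * b * c \<and>
    0 \<le> PR \<and> PR \<le> real m * a * b * c * (real m ^ 2 * a * b * c) \<and>
    0 \<le> PS \<and> real m * a * b * c * ((1 - a) * (1 - b) * (1 - real m * (a*b + a*c + b*c)) * ((real m - 1) * c)) \<le> PS \<and>
    PS \<le> real m * a * b * c * (real m * c)"
proof (intro exI conjI)
  show "cond_clust n m p i j k = (P T + P (Aev - T)) / (P T + P (Bev - T))" by (rule cond_eq)
  show "real m * a * b * c * (1 - real m * a * b * c) \<le> P T" using P_T_lower by (simp add: algebra_simps)
  show "P T \<le> real m * a * b * c" using P_T_upper by (simp add: algebra_simps)
  show "P (Aev - T) \<le> real m * a * b * c * (real m ^ 2 * a * b * c)"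
    using P_AT_upper by (simp add: algebra_simps power2_eq_square power3_eq_cube)
  show "P (Bev - T) \<le> real m * a * b * c * (real m * c)"
    using P_BT_upper by (simp add: algebra_simps power2_eq_square)
  show "real m * a * b * c * ((1 - a) * (1 - b) * (1 - real m * (a*b + a*c + b*c)) * ((real m - 1) * c)) \<le> P (Bev - T)"
    using P_BT_lower m1 by (simp add: algebra_simps power2_eq_square of_nat_diff)
qed auto

end

lemma pmf_bernoulli_gen: "pmf (bernoulli_pmf r) t = (if t then min 1 (max 0 r) else 1 - min 1 (max 0 r))"
  by (simp add: bernoulli_pmf.rep_eq)

lemma meas_prob_Pi_bern:
  assumes A: "finite A" and q: "\<And>x. (\<lambda>\<omega>. q x \<omega>) \<in> borel_measurable M"
  shows "(\<lambda>\<omega>. measure_pmf.prob (Pi_pmf A dflt (\<lambda>x. bernoulli_pmf (q x \<omega>))) S) \<in> borel_measurable M"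
proof -
  define Fs where "Fs = PiE_dflt A dflt (\<lambda>_. UNIV :: bool set)"
  have finF: "finite Fs" unfolding Fs_def using A by auto
  have eq: "measure_pmf.prob (Pi_pmf A dflt (\<lambda>x. bernoulli_pmf (q x \<omega>))) S =
      (\<Sum>f\<in>S \<inter> Fs. \<Prod>x\<in>A. (if f x then min 1 (max 0 (q x \<omega>)) else 1 - min 1 (max 0 (q x \<omega>))))" for \<omega>
  proof -
    let ?Q = "Pi_pmf A dflt (\<lambda>x. bernoulli_pmf (q x \<omega>))"
    have sub: "set_pmf ?Q \<subseteq> Fs" using set_Pi_pmf_subset[OF A, of dflt "\<lambda>x. bernoulli_pmf (q x \<omega>)"] by (auto simp: Fs_def PiE_dflt_def)
    have "measure_pmf.prob ?Q S = measure_pmf.prob ?Q (S \<inter> set_pmf ?Q)" by (simp add: measure_Int_set_pmf)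
    also have "S \<inter> set_pmf ?Q = (S \<inter> Fs) \<inter> set_pmf ?Q" using sub by auto
    also have "measure_pmf.prob ?Q \<dots> = measure_pmf.prob ?Q (S \<inter> Fs)" by (simp add: measure_Int_set_pmf)
    also have "\<dots> = (\<Sum>f\<in>S \<inter> Fs. pmf ?Q f)" by (rule measure_measure_pmf_finite) (use finF in auto)
    also have "\<dots> = (\<Sum>f\<in>S \<inter> Fs. \<Prod>x\<in>A. (if f x then min 1 (max 0 (q x \<omega>)) else 1 - min 1 (max 0 (q x \<omega>))))"
      by (intro sum.cong refl) (auto simp: pmf_Pi[OF A] Fs_def PiE_dflt_def pmf_bernoulli_gen)
    finally show ?thesis .
  qed
  have m: "(\<lambda>\<omega>. if t then min 1 (max 0 (q x \<omega>)) else 1 - min 1 (max 0 (q x \<omega>))) \<in> borel_measurable M" for t x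
    using q[of x] by (cases t) auto
  show ?thesis unfolding eq
    by (intro borel_measurable_sum borel_measurable_prod m)
qed

lemma meas_cond_clust:
  assumes q: "\<And>l. (\<lambda>\<omega>. q l \<omega>) \<in> borel_measurable M"
  shows "(\<lambda>\<omega>. cond_clust n m (\<lambda>l. q l \<omega>) i j k) \<in> borel_measurable M"
proof -
  have bl: "bip_law n m (\<lambda>l. q l \<omega>) = Pi_pmf ({1..n} \<times> {..<m}) False (\<lambda>x. bernoulli_pmf (q (fst x) \<omega>))" for \<omega>
    unfolding bip_law_def by (simp add: split_def)
  have q': "\<And>x. (\<lambda>\<omega>. q (fst x) \<omega>) \<in> borel_measurable M" using q by simp
  show ?thesis unfolding cond_clust_def bl
    by (intro borel_measurable_divide meas_prob_Pi_bern[OF _ q']) auto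
qed

lemma ae_conv:
  assumes M: "prob_space M" and X: "\<And>n. X n \<in> borel_measurable M" and L: "L \<in> borel_measurable M"
    and ae: "AE \<omega> in M. (\<lambda>n. X n \<omega>) \<longlonglongrightarrow> L \<omega>"
  shows "conv_in_prob M X L"
  unfolding conv_in_prob_def
proof (intro conjI allI impI X L)
  fix \<epsilon> :: real assume e: "\<epsilon> > 0"
  interpret prob_space M by (rule M)
  define S where "S n = {\<omega> \<in> space M. \<epsilon> < \<bar>X n \<omega> - L \<omega>\<bar>}" for n
  have Sm: "S n \<in> sets M" for n unfolding S_def using X[of n] L by measurable
  have "(\<lambda>n. integral\<^sup>L M (indicator (S n) :: 'a \<Rightarrow> real)) \<longlonglongrightarrow> integral\<^sup>L M (\<lambda>_. 0::real)"
  proof (rule integral_dominated_convergence[where w="\<lambda>_. 1"])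
    show "(\<lambda>_. 0::real) \<in> borel_measurable M" by simp
    show "(indicator (S n) :: 'a \<Rightarrow> real) \<in> borel_measurable M" for n using Sm by simp
    show "integrable M (\<lambda>_. 1::real)" by simp
    show "AE x in M. (\<lambda>n. indicator (S n) x :: real) \<longlonglongrightarrow> 0"
      using ae
    proof eventually_elim
      case (elim \<omega>)
      have "eventually (\<lambda>n. dist (X n \<omega>) (L \<omega>) < \<epsilon>) sequentially"
        using elim e by (rule tendstoD)
      then have "eventually (\<lambda>n. indicator (S n) \<omega> = (0::real)) sequentially"
        by (rule eventually_mono) (auto simp: S_def dist_real_def indicator_def)
      then show ?case by (rule tendsto_eventually)
    qed
    show "AE x in M. norm (indicator (S n) x :: real) \<le> 1" for n by (auto simp: indicator_def)
  qed
  then show "(\<lambda>n. measure M {\<omega> \<in> space M. \<epsilon> < \<bar>X n \<omega> - L \<omega>\<bar>}) \<longlonglongrightarrow> 0"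
    using Sm by (simp add: S_def Int_absorb2 sets.sets_into_space)
qed



lemma ratio_lim:
  fixes X PT PR PS \<rho> sL sU :: "nat \<Rightarrow> real"
  assumes ev: "eventually (\<lambda>n. X n > 0 \<and> X n * (1 - X n) \<le> PT n \<and> 0 \<le> PT n \<and> PT n \<le> X n \<and> 0 \<le> PR n \<and> PR n \<le> X n * \<rho> n
       \<and> 0 \<le> PS n \<and> X n * sL n \<le> PS n \<and> PS n \<le> X n * sU n) sequentially"
    and X: "X \<longlonglongrightarrow> 0"
  shows ratio_lim_a: "\<rho> \<longlonglongrightarrow> 0 \<Longrightarrow> sU \<longlonglongrightarrow> 0 \<Longrightarrow> (\<lambda>n. (PT n + PR n) / (PT n + PS n)) \<longlonglongrightarrow> 1"
    and ratio_lim_b: "\<rho> \<longlonglongrightarrow> 0 \<Longrightarrow> sL \<longlonglongrightarrow> L \<Longrightarrow> sU \<longlonglongrightarrow> L \<Longrightarrow> L \<ge> 0 \<Longrightarrow>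
        (\<lambda>n. (PT n + PR n) / (PT n + PS n)) \<longlonglongrightarrow> 1 / (1 + L)"
    and ratio_lim_c: "filterlim sL at_top sequentially \<Longrightarrow> (\<lambda>n. \<rho> n / sL n) \<longlonglongrightarrow> 0 \<Longrightarrow>
        (\<lambda>n. (PT n + PR n) / (PT n + PS n)) \<longlonglongrightarrow> 0"
proof -
  define t where "t n = PT n / X n" for n
  define r where "r n = PR n / X n" for n
  define s where "s n = PS n / X n" for n
  have ev2: "eventually (\<lambda>n. 1 - X n \<le> t n \<and> t n \<le> 1 \<and> 0 \<le> r n \<and> r n \<le> \<rho> n \<and> 0 \<le> s n \<and> sL n \<le> s n \<and> s n \<le> sU n
     \<and> (PT n + PR n) / (PT n + PS n) = (t n + r n) / (t n + s n)) sequentially"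
    using ev
  proof eventually_elim
    case (elim n)
    then have X0: "X n > 0" by simp
    have e1: "1 - X n \<le> t n" using elim X0 by (simp add: t_def le_divide_eq mult.commute)
    have e2: "t n \<le> 1" using elim X0 by (simp add: t_def divide_le_eq)
    have e3: "0 \<le> r n" "r n \<le> \<rho> n" using elim X0 by (simp_all add: r_def divide_le_eq mult.commute)
    have e4: "0 \<le> s n" "sL n \<le> s n" "s n \<le> sU n" using elim X0 by (simp_all add: s_def divide_le_eq le_divide_eq mult.commute)
    have "(t n + r n) / (t n + s n) = (X n * (t n + r n)) / (X n * (t n + s n))" using X0 by simp
    also have "\<dots> = (PT n + PR n) / (PT n + PS n)" using X0 by (simp add: t_def r_def s_def algebra_simps)
    finally show ?case using e1 e2 e3 e4 by simp
  qed
  have t: "t \<longlonglongrightarrow> 1"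
  proof (rule tendsto_sandwich[of "\<lambda>n. 1 - X n" _ _ "\<lambda>_. 1"])
    show "eventually (\<lambda>n. 1 - X n \<le> t n) sequentially" using ev2 by (rule eventually_mono) auto
    show "eventually (\<lambda>n. t n \<le> 1) sequentially" using ev2 by (rule eventually_mono) auto
    show "(\<lambda>n. 1 - X n) \<longlonglongrightarrow> 1" using tendsto_diff[OF tendsto_const X, of 1] by simp
  qed simp
  have rr: "r \<longlonglongrightarrow> 0" if "\<rho> \<longlonglongrightarrow> 0"
    by (rule tendsto_sandwich[of "\<lambda>_. 0" _ _ \<rho>]) (use ev2 that in \<open>auto elim: eventually_mono\<close>)
  show "\<rho> \<longlonglongrightarrow> 0 \<Longrightarrow> sU \<longlonglongrightarrow> 0 \<Longrightarrow> (\<lambda>n. (PT n + PR n) / (PT n + PS n)) \<longlonglongrightarrow> 1"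
  proof -
    assume r0: "\<rho> \<longlonglongrightarrow> 0" and sU: "sU \<longlonglongrightarrow> 0"
    have s: "s \<longlonglongrightarrow> 0"
      by (rule tendsto_sandwich[of "\<lambda>_. 0" _ _ sU]) (use ev2 sU in \<open>auto elim: eventually_mono\<close>)
    have "(\<lambda>n. (t n + r n) / (t n + s n)) \<longlonglongrightarrow> (1 + 0) / (1 + 0)"
      by (intro tendsto_intros t rr[OF r0] s) simp
    then have "(\<lambda>n. (t n + r n) / (t n + s n)) \<longlonglongrightarrow> 1" by simp
    then show ?thesis
      by (rule Lim_transform_eventually) (use ev2 in \<open>auto elim: eventually_mono\<close>)
  qed
  show "\<rho> \<longlonglongrightarrow> 0 \<Longrightarrow> sL \<longlonglongrightarrow> L \<Longrightarrow> sU \<longlonglongrightarrow> L \<Longrightarrow> L \<ge> 0 \<Longrightarrow>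
        (\<lambda>n. (PT n + PR n) / (PT n + PS n)) \<longlonglongrightarrow> 1 / (1 + L)"
  proof -
    assume r0: "\<rho> \<longlonglongrightarrow> 0" and sL: "sL \<longlonglongrightarrow> L" and sU: "sU \<longlonglongrightarrow> L" and L: "L \<ge> 0"
    have s: "s \<longlonglongrightarrow> L"
      by (rule tendsto_sandwich[of sL _ _ sU]) (use ev2 sU sL in \<open>auto elim: eventually_mono\<close>)
    have "(\<lambda>n. (t n + r n) / (t n + s n)) \<longlonglongrightarrow> (1 + 0) / (1 + L)"
      by (intro tendsto_intros t rr[OF r0] s) (use L in simp)
    then have "(\<lambda>n. (t n + r n) / (t n + s n)) \<longlonglongrightarrow> 1 / (1 + L)" by simp
    then show ?thesis
      by (rule Lim_transform_eventually) (use ev2 in \<open>auto elim: eventually_mono\<close>)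
  qed
  show "filterlim sL at_top sequentially \<Longrightarrow> (\<lambda>n. \<rho> n / sL n) \<longlonglongrightarrow> 0 \<Longrightarrow>
        (\<lambda>n. (PT n + PR n) / (PT n + PS n)) \<longlonglongrightarrow> 0"
  proof -
    assume sL: "filterlim sL at_top sequentially" and rs: "(\<lambda>n. \<rho> n / sL n) \<longlonglongrightarrow> 0"
    have inv: "(\<lambda>n. 1 / sL n) \<longlonglongrightarrow> 0"
      by (rule tendsto_divide_0[OF tendsto_const filterlim_at_top_imp_at_infinity[OF sL]])
    have up: "(\<lambda>n. 1 / sL n + \<rho> n / sL n) \<longlonglongrightarrow> 0"
      using tendsto_add[OF inv rs] by simp
    have evp: "eventually (\<lambda>n. sL n > 0) sequentially" using sL by (simp add: filterlim_at_top_dense)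
    show ?thesis
    proof (rule tendsto_sandwich[of "\<lambda>_. 0" _ _ "\<lambda>n. 1 / sL n + \<rho> n / sL n"])
      show "eventually (\<lambda>n. 0 \<le> (PT n + PR n) / (PT n + PS n)) sequentially"
        using ev by (rule eventually_mono) (auto intro!: divide_nonneg_nonneg)
      show "eventually (\<lambda>n. (PT n + PR n) / (PT n + PS n) \<le> 1 / sL n + \<rho> n / sL n) sequentially"
        using ev evp
      proof eventually_elim
        case (elim n)
        then have X0: "X n > 0" and sp: "sL n > 0" by auto
        have "(PT n + PR n) / (PT n + PS n) \<le> (X n * (1 + \<rho> n)) / (X n * sL n)"
        proof (rule frac_le)
          show "0 \<le> X n * (1 + \<rho> n)" using elim by (simp add: algebra_simps)
          show "PT n + PR n \<le> X n * (1 + \<rho> n)" using elim by (simp add: algebra_simps)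
          show "0 < X n * sL n" using X0 sp by simp
          show "X n * sL n \<le> PT n + PS n" using elim X0
            by (smt (verit) mult_nonneg_nonneg)
        qed
        also have "\<dots> = 1 / sL n + \<rho> n / sL n" using X0 sp by (simp add: field_simps)
        finally show ?case .
      qed
    qed (use up in auto)
  qed
qed

lemma ratio_lim':
  fixes X \<rho> sL sU cs :: "nat \<Rightarrow> real"
  assumes ev: "eventually (\<lambda>n. \<exists>PT PR PS. cs n = (PT + PR) / (PT + PS) \<and> X n > 0 \<and> X n * (1 - X n) \<le> PT \<and> 0 \<le> PT \<and> PT \<le> X n \<and> 0 \<le> PR \<and> PR \<le> X n * \<rho> n
       \<and> 0 \<le> PS \<and> X n * sL n \<le> PS \<and> PS \<le> X n * sU n) sequentially"
    and X: "X \<longlonglongrightarrow> 0"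
  shows "(\<rho> \<longlonglongrightarrow> 0 \<longrightarrow> sU \<longlonglongrightarrow> 0 \<longrightarrow> cs \<longlonglongrightarrow> 1) \<and>
         (\<rho> \<longlonglongrightarrow> 0 \<longrightarrow> sL \<longlonglongrightarrow> L \<longrightarrow> sU \<longlonglongrightarrow> L \<longrightarrow> L \<ge> 0 \<longrightarrow> cs \<longlonglongrightarrow> 1 / (1 + L)) \<and>
         (filterlim sL at_top sequentially \<longrightarrow> (\<lambda>n. \<rho> n / sL n) \<longlonglongrightarrow> 0 \<longrightarrow> cs \<longlonglongrightarrow> 0)"
proof -
  define Q where "Q n = (\<lambda>(PT, PR, PS). cs n = (PT + PR) / (PT + PS) \<and> X n > 0 \<and> X n * (1 - X n) \<le> PT \<and> 0 \<le> PT \<and> PT \<le> X n \<and> 0 \<le> PR \<and> PR \<le> X n * \<rho> n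
       \<and> 0 \<le> PS \<and> X n * sL n \<le> PS \<and> PS \<le> X n * sU n)" for n
  define tr where "tr n = (SOME t. Q n t)" for n
  have evQ: "eventually (\<lambda>n. Q n (tr n)) sequentially"
    using ev
  proof eventually_elim
    case (elim n)
    then have "\<exists>t. Q n t" unfolding Q_def by auto
    then show ?case unfolding tr_def by (rule someI_ex)
  qed
  define PT where "PT n = fst (tr n)" for n
  define PR where "PR n = fst (snd (tr n))" for n
  define PS where "PS n = snd (snd (tr n))" for n
  have ev1: "eventually (\<lambda>n. X n > 0 \<and> X n * (1 - X n) \<le> PT n \<and> 0 \<le> PT n \<and> PT n \<le> X n \<and> 0 \<le> PR n \<and> PR n \<le> X n * \<rho> n
       \<and> 0 \<le> PS n \<and> X n * sL n \<le> PS n \<and> PS n \<le> X n * sU n) sequentially"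
    using evQ by (rule eventually_mono) (auto simp: Q_def PT_def PR_def PS_def split: prod.splits)
  have ev2: "eventually (\<lambda>n. (PT n + PR n) / (PT n + PS n) = cs n) sequentially"
    using evQ by (rule eventually_mono) (auto simp: Q_def PT_def PR_def PS_def split: prod.splits)
  note R = ratio_lim_a[OF ev1 X] ratio_lim_b[OF ev1 X] ratio_lim_c[OF ev1 X]
  show ?thesis using R Lim_transform_eventually[OF _ ev2] by blast
qed



locale asy =
  fixes \<alpha> \<beta> \<gamma> u v w :: real
  assumes pos: "\<alpha> > 0" "\<beta> > 0" "\<gamma> > 0" "u > 0" "v > 0" "w > 0"
begin

definition "M n = real (num_groups \<alpha> \<beta> n)"
definition "e n = real n powr (-(1+\<alpha>)/2)"

lemma M_bounds: "\<beta> * real n powr \<alpha> - 1 \<le> M n" "M n \<le> \<beta> * real n powr \<alpha>" "0 \<le> M n"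
proof -
  have x0: "0 \<le> \<beta> * real n powr \<alpha>" using pos by simp
  have "M n = real_of_int \<lfloor>\<beta> * real n powr \<alpha>\<rfloor>"
    unfolding M_def num_groups_def using x0 by (simp add: of_nat_nat)
  then show "\<beta> * real n powr \<alpha> - 1 \<le> M n" "M n \<le> \<beta> * real n powr \<alpha>"
    using of_int_floor_le[of "\<beta> * real n powr \<alpha>"] real_of_int_floor_gt_diff_one[of "\<beta> * real n powr \<alpha>"]
    by linarith+
  show "0 \<le> M n" by (simp add: M_def)
qed

lemma npow_at_top: "filterlim (\<lambda>n. real n powr \<alpha>) at_top sequentially"
  by (rule filterlim_compose[OF real_powr_at_top[OF pos(1)] filterlim_real_sequentially])

lemma e_0: "e \<longlonglongrightarrow> 0"
  unfolding e_def by (rule tendsto_neg_powr[OF _ filterlim_real_sequentially]) (use pos in simp)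

lemma e_pos: "n > 0 \<Longrightarrow> e n > 0" by (simp add: e_def)

lemma ne1: "n > 0 \<Longrightarrow> real n powr \<alpha> * e n = real n powr ((\<alpha> - 1)/2)"
  by (simp add: e_def powr_add[symmetric] field_simps)

lemma ne2: "n > 0 \<Longrightarrow> real n powr \<alpha> * (e n * e n) = 1 / real n"
proof -
  assume n: "n > 0"
  have "real n powr \<alpha> * (e n * e n) = real n powr (\<alpha> + (-(1+\<alpha>)/2) + (-(1+\<alpha>)/2))"
    unfolding e_def powr_add by (simp add: mult.assoc)
  also have "\<alpha> + (-(1+\<alpha>)/2) + (-(1+\<alpha>)/2) = -1" by (simp add: field_simps)
  also have "real n powr (-1) = 1 / real n" using n by (simp add: powr_minus divide_inverse)
  finally show ?thesis .
qed

lemma M_top: "filterlim M at_top sequentially"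
proof -
  have "filterlim (\<lambda>n. (-1) + \<beta> * real n powr \<alpha>) at_top sequentially"
    by (rule filterlim_tendsto_add_at_top[OF tendsto_const])
       (rule filterlim_tendsto_pos_mult_at_top[OF tendsto_const pos(2) npow_at_top])
  then show ?thesis
    by (rule filterlim_at_top_mono) (use M_bounds in \<open>auto\<close>)
qed

lemma Mee_0:
  assumes "x > 0" "y > 0"
  shows "(\<lambda>n. M n * (x * e n) * (y * e n)) \<longlonglongrightarrow> 0"
proof (rule tendsto_sandwich[of "\<lambda>_. 0" _ _ "\<lambda>n. \<beta> * x * y * (1 / real n)"])
  show "eventually (\<lambda>n. 0 \<le> M n * (x * e n) * (y * e n)) sequentially"
    using assms by (intro always_eventually allI) (simp add: M_bounds e_def)
  show "eventually (\<lambda>n. M n * (x * e n) * (y * e n) \<le> \<beta> * x * y * (1 / real n)) sequentially"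
    using eventually_gt_at_top[of 0]
  proof eventually_elim
    case (elim n)
    have "M n * (x * e n) * (y * e n) = M n * (x * y * (e n * e n))" by (simp add: algebra_simps)
    also have "\<dots> \<le> \<beta> * real n powr \<alpha> * (x * y * (e n * e n))"
      by (rule mult_right_mono[OF M_bounds(2)]) (use assms in simp)
    also have "\<dots> = \<beta> * x * y * (real n powr \<alpha> * (e n * e n))" by (simp add: algebra_simps)
    also have "\<dots> = \<beta> * x * y * (1 / real n)" using ne2[OF elim] by simp
    finally show ?case .
  qed
  show "(\<lambda>n. \<beta> * x * y * (1 / real n)) \<longlonglongrightarrow> 0"
    using tendsto_mult[OF tendsto_const lim_const_over_n[of 1], of "\<beta> * x * y"] by simp
qed simp

lemma Me_upper: "n > 0 \<Longrightarrow> M n * (x * e n) \<le> \<beta> * x * real n powr ((\<alpha> - 1)/2)" if "x > 0"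
proof -
  assume n: "n > 0"
  have "M n * (x * e n) \<le> \<beta> * real n powr \<alpha> * (x * e n)"
    by (rule mult_right_mono[OF M_bounds(2)]) (use that in \<open>simp add: e_def\<close>)
  also have "\<dots> = \<beta> * x * (real n powr \<alpha> * e n)" by (simp add: algebra_simps)
  finally show ?thesis using ne1[OF n] by simp
qed

lemma Me_lower: "n > 0 \<Longrightarrow> \<beta> * x * real n powr ((\<alpha> - 1)/2) - x * e n \<le> M n * (x * e n)" if "x > 0"
proof -
  assume n: "n > 0"
  have "\<beta> * x * real n powr ((\<alpha> - 1)/2) - x * e n = (\<beta> * real n powr \<alpha> - 1) * (x * e n)"
    using ne1[OF n] by (simp add: algebra_simps)
  also have "\<dots> \<le> M n * (x * e n)"
    by (rule mult_right_mono[OF M_bounds(1)]) (use that in \<open>simp add: e_def\<close>)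
  finally show ?thesis .
qed

lemma xe_0: "(\<lambda>n. x * e n) \<longlonglongrightarrow> 0"
  using tendsto_mult[OF tendsto_const e_0, of x] by simp

lemma Me_lt1: "\<alpha> < 1 \<Longrightarrow> x > 0 \<Longrightarrow> (\<lambda>n. M n * (x * e n)) \<longlonglongrightarrow> 0"
proof (rule tendsto_sandwich[of "\<lambda>_. 0" _ _ "\<lambda>n. \<beta> * x * real n powr ((\<alpha> - 1)/2)"])
  assume a: "\<alpha> < 1" and x: "x > 0"
  show "eventually (\<lambda>n. 0 \<le> M n * (x * e n)) sequentially"
    using x by (intro always_eventually allI) (simp add: M_bounds e_def)
  show "eventually (\<lambda>n. M n * (x * e n) \<le> \<beta> * x * real n powr ((\<alpha> - 1)/2)) sequentially"
    using eventually_gt_at_top[of 0] by eventually_elim (rule Me_upper[OF x])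
  have "(\<lambda>n. real n powr ((\<alpha> - 1)/2)) \<longlonglongrightarrow> 0"
    by (rule tendsto_neg_powr[OF _ filterlim_real_sequentially]) (use a in simp)
  from tendsto_mult[OF tendsto_const this, of "\<beta> * x"]
  show "(\<lambda>n. \<beta> * x * real n powr ((\<alpha> - 1)/2)) \<longlonglongrightarrow> 0" by simp
qed simp

lemma Me_eq1: "\<alpha> = 1 \<Longrightarrow> x > 0 \<Longrightarrow> (\<lambda>n. M n * (x * e n)) \<longlonglongrightarrow> \<beta> * x"
proof (rule tendsto_sandwich[of "\<lambda>n. \<beta> * x - x * e n" _ _ "\<lambda>_. \<beta> * x"])
  assume a: "\<alpha> = 1" and x: "x > 0"
  show "eventually (\<lambda>n. \<beta> * x - x * e n \<le> M n * (x * e n)) sequentially"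
    using eventually_gt_at_top[of 0] by eventually_elim (use Me_lower[OF x] a in auto)
  show "eventually (\<lambda>n. M n * (x * e n) \<le> \<beta> * x) sequentially"
    using eventually_gt_at_top[of 0] by eventually_elim (use Me_upper[OF x] a in auto)
  show "(\<lambda>n. \<beta> * x - x * e n) \<longlonglongrightarrow> \<beta> * x"
    using tendsto_diff[OF tendsto_const xe_0, of "\<beta> * x" x] by simp
qed simp

lemma Me_gt1: "\<alpha> > 1 \<Longrightarrow> x > 0 \<Longrightarrow> filterlim (\<lambda>n. (M n - 1) * (x * e n)) at_top sequentially"
proof -
  assume a: "\<alpha> > 1" and x: "x > 0"
  have "filterlim (\<lambda>n. real n powr ((\<alpha> - 1)/2)) at_top sequentially"
    by (rule filterlim_compose[OF real_powr_at_top filterlim_real_sequentially]) (use a in simp)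
  then have h1: "filterlim (\<lambda>n. \<beta> * x * real n powr ((\<alpha> - 1)/2)) at_top sequentially"
    by (intro filterlim_tendsto_pos_mult_at_top[OF tendsto_const]) (use pos x in simp_all)
  have h2: "(\<lambda>n. - 2 * (x * e n)) \<longlonglongrightarrow> 0"
    using tendsto_mult[OF tendsto_const xe_0, of "-2"] by simp
  have "filterlim (\<lambda>n. (- 2 * (x * e n)) + \<beta> * x * real n powr ((\<alpha> - 1)/2)) at_top sequentially"
    by (rule filterlim_tendsto_add_at_top[OF h2 h1])
  then show ?thesis
  proof (rule filterlim_at_top_mono)
    show "eventually (\<lambda>n. (- 2 * (x * e n)) + \<beta> * x * real n powr ((\<alpha> - 1)/2) \<le> (M n - 1) * (x * e n)) sequentially"
      using eventually_gt_at_top[of 0]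
    proof eventually_elim
      case (elim n)
      show ?case using Me_lower[OF x elim] by (simp add: algebra_simps)
    qed
  qed
qed

end



context asy begin

lemma pointwise:
  fixes Wf :: "nat \<Rightarrow> real" and i j k :: nat
  assumes ijk: "i \<ge> 1" "j \<ge> 1" "k \<ge> 1" "i \<noteq> j" "i \<noteq> k" "j \<noteq> k"
    and W: "Wf i = u" "Wf j = v" "Wf k = w"
  shows "(\<alpha> < 1 \<longrightarrow> (\<lambda>n. cond_clust n (num_groups \<alpha> \<beta> n) (\<lambda>l. edge_prob \<alpha> \<gamma> n (Wf l)) i j k) \<longlonglongrightarrow> 1)
       \<and> (\<alpha> = 1 \<longrightarrow> (\<lambda>n. cond_clust n (num_groups \<alpha> \<beta> n) (\<lambda>l. edge_prob \<alpha> \<gamma> n (Wf l)) i j k) \<longlonglongrightarrow> 1 / (1 + \<beta> * \<gamma> * w))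
       \<and> (\<alpha> > 1 \<longrightarrow> (\<lambda>n. cond_clust n (num_groups \<alpha> \<beta> n) (\<lambda>l. edge_prob \<alpha> \<gamma> n (Wf l)) i j k) \<longlonglongrightarrow> 0)"
proof -
  define cs where "cs n = cond_clust n (num_groups \<alpha> \<beta> n) (\<lambda>l. edge_prob \<alpha> \<gamma> n (Wf l)) i j k" for n
  define a where "a n = \<gamma> * u * e n" for n
  define b where "b n = \<gamma> * v * e n" for n
  define c where "c n = \<gamma> * w * e n" for n
  define X where "X n = M n * a n * b n * c n" for n
  define \<rho> where "\<rho> n = M n ^ 2 * a n * b n * c n" for n
  define sU where "sU n = M n * c n" for n
  define Q where "Q n = (1 - a n) * (1 - b n) * (1 - M n * (a n * b n + a n * c n + b n * c n))" for n
  define sL where "sL n = Q n * ((M n - 1) * c n)" for n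
  have a0: "a \<longlonglongrightarrow> 0" "b \<longlonglongrightarrow> 0" "c \<longlonglongrightarrow> 0" unfolding a_def b_def c_def by (rule xe_0)+
  have gu: "\<gamma> * u > 0" "\<gamma> * v > 0" "\<gamma> * w > 0" using pos by auto
  have Mab: "(\<lambda>n. M n * a n * b n) \<longlonglongrightarrow> 0" "(\<lambda>n. M n * a n * c n) \<longlonglongrightarrow> 0" "(\<lambda>n. M n * b n * c n) \<longlonglongrightarrow> 0"
    unfolding a_def b_def c_def by (rule Mee_0; use gu in simp)+
  have X0: "X \<longlonglongrightarrow> 0"
    unfolding X_def using tendsto_mult[OF Mab(1) a0(3)] by simp
  have Q1: "Q \<longlonglongrightarrow> 1"
  proof -
    have "(\<lambda>n. M n * (a n * b n + a n * c n + b n * c n)) \<longlonglongrightarrow> 0"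
      using tendsto_add[OF tendsto_add[OF Mab(1) Mab(2)] Mab(3)] by (simp add: algebra_simps)
    from tendsto_mult[OF tendsto_mult[OF tendsto_diff[OF tendsto_const a0(1)] tendsto_diff[OF tendsto_const a0(2)]]
        tendsto_diff[OF tendsto_const this], of 1 1 1]
    show ?thesis unfolding Q_def by simp
  qed
  have small: "eventually (\<lambda>n. n > 0 \<and> n \<ge> i \<and> n \<ge> j \<and> n \<ge> k \<and> a n < 1 \<and> b n < 1 \<and> c n < 1 \<and> M n \<ge> 2) sequentially"
    using eventually_gt_at_top[of 0] eventually_ge_at_top[of i] eventually_ge_at_top[of j] eventually_ge_at_top[of k]
      order_tendstoD(2)[OF a0(1) zero_less_one] order_tendstoD(2)[OF a0(2) zero_less_one] order_tendstoD(2)[OF a0(3) zero_less_one]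
      filterlim_at_top[THEN iffD1, OF M_top, rule_format, of 2]
    by eventually_elim auto
  have ev: "eventually (\<lambda>n. \<exists>PT PR PS. cs n = (PT + PR) / (PT + PS) \<and> X n > 0 \<and> X n * (1 - X n) \<le> PT \<and> 0 \<le> PT \<and> PT \<le> X n \<and> 0 \<le> PR \<and> PR \<le> X n * \<rho> n
       \<and> 0 \<le> PS \<and> X n * sL n \<le> PS \<and> PS \<le> X n * sU n) sequentially"
    using small
  proof eventually_elim
    case (elim n)
    have en: "e n > 0" using e_pos elim by auto
    have pa: "edge_prob \<alpha> \<gamma> n (Wf i) = a n" "edge_prob \<alpha> \<gamma> n (Wf j) = b n" "edge_prob \<alpha> \<gamma> n (Wf k) = c n"
      using elim by (auto simp: edge_prob_def W a_def b_def c_def e_def)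
    have apos: "a n > 0" "b n > 0" "c n > 0" using en gu by (auto simp: a_def b_def c_def)
    interpret rig n "num_groups \<alpha> \<beta> n" "\<lambda>l. edge_prob \<alpha> \<gamma> n (Wf l)" i j k
      by unfold_locales (use elim ijk pa apos in auto)
    have m1: "num_groups \<alpha> \<beta> n \<ge> 1" using elim by (simp add: M_def)
    have Mn: "real (num_groups \<alpha> \<beta> n) = M n" by (simp add: M_def)
    have X0: "X n > 0" using apos elim by (simp add: X_def)
    show ?case using rig_bounds[OF m1] X0 unfolding pa Mn cs_def[symmetric]
      by (simp add: X_def \<rho>_def sU_def sL_def Q_def algebra_simps)
  qed
  note R = ratio_lim'[OF ev X0, of "\<beta> * \<gamma> * w"]
  have A: "\<alpha> < 1 \<Longrightarrow> cs \<longlonglongrightarrow> 1"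
  proof -
    assume a: "\<alpha> < 1"
    have Mc: "sU \<longlonglongrightarrow> 0" unfolding sU_def c_def by (rule Me_lt1[OF a gu(3)])
    have "\<rho> \<longlonglongrightarrow> 0" unfolding \<rho>_def using tendsto_mult[OF Mab(1) Mc] by (simp add: sU_def power2_eq_square algebra_simps)
    then show ?thesis using R Mc by blast
  qed
  have B: "\<alpha> = 1 \<Longrightarrow> cs \<longlonglongrightarrow> 1 / (1 + \<beta> * \<gamma> * w)"
  proof -
    assume a: "\<alpha> = 1"
    have Mc: "sU \<longlonglongrightarrow> \<beta> * \<gamma> * w" unfolding sU_def c_def using Me_eq1[OF a gu(3)] by (simp add: mult.assoc)
    have "\<rho> \<longlonglongrightarrow> 0" unfolding \<rho>_def using tendsto_mult[OF Mab(1) Mc] by (simp add: sU_def power2_eq_square algebra_simps)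
    moreover have "sL \<longlonglongrightarrow> \<beta> * \<gamma> * w"
    proof -
      have "(\<lambda>n. (M n - 1) * c n) \<longlonglongrightarrow> \<beta> * \<gamma> * w - 0"
        using tendsto_diff[OF Mc a0(3)] by (simp add: sU_def algebra_simps)
      from tendsto_mult[OF Q1 this] show ?thesis unfolding sL_def by simp
    qed
    ultimately show ?thesis using R Mc pos by (auto intro: mult_nonneg_nonneg)
  qed
  have C: "\<alpha> > 1 \<Longrightarrow> cs \<longlonglongrightarrow> 0"
  proof -
    assume a: "\<alpha> > 1"
    have Mc: "filterlim (\<lambda>n. (M n - 1) * c n) at_top sequentially"
      unfolding c_def by (rule Me_gt1[OF a gu(3)])
    have sL: "filterlim sL at_top sequentially"
      unfolding sL_def by (rule filterlim_tendsto_pos_mult_at_top[OF Q1 _ Mc]) simp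
    have "(\<lambda>n. 1 / (M n - 1)) \<longlonglongrightarrow> 0"
    proof (rule tendsto_divide_0[OF tendsto_const])
      have "filterlim (\<lambda>n. (-1) + M n) at_top sequentially"
        by (rule filterlim_tendsto_add_at_top[OF tendsto_const M_top])
      then show "filterlim (\<lambda>n. M n - 1) at_infinity sequentially"
        by (intro filterlim_at_top_imp_at_infinity) simp
    qed
    then have MM: "(\<lambda>n. 1 + 1 / (M n - 1)) \<longlonglongrightarrow> 1" using tendsto_add[OF tendsto_const, of _ 0 _ 1] by simp
    have lim: "(\<lambda>n. (M n * a n * b n) * (1 + 1 / (M n - 1)) / Q n) \<longlonglongrightarrow> 0 * 1 / 1"
      by (intro tendsto_intros Mab(1) MM Q1) simp
    have "(\<lambda>n. \<rho> n / sL n) \<longlonglongrightarrow> 0"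
    proof (rule Lim_transform_eventually[OF lim[simplified]])
      show "eventually (\<lambda>n. M n * a n * b n * (1 + 1 / (M n - 1)) / Q n = \<rho> n / sL n) sequentially"
        using small order_tendstoD(1)[OF Q1 zero_less_one]
      proof eventually_elim
        case (elim n)
        have en: "e n > 0" using e_pos elim by auto
        have cpos: "c n > 0" using en gu by (auto simp: c_def)
        have M1: "M n - 1 > 0" using elim by simp
        have "1 + 1 / (M n - 1) = M n / (M n - 1)" using M1 by (simp add: field_simps)
        then show ?case using cpos M1 elim
          by (simp add: \<rho>_def sL_def field_simps power2_eq_square)
      qed
    qed
    then show ?thesis using R sL by blast
  qed
  show ?thesis using A B C unfolding cs_def by blast
qed

end

theorem theorem1p3:
  fixes M :: "'a measure" and F :: "real measure" and W :: "nat \<Rightarrow> 'a \<Rightarrow> real"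
    and \<alpha> \<beta> \<gamma> :: real and i j k :: nat
  assumes M: "prob_space M"
    and F: "prob_space F" "sets F = sets borel" "measure F {0<..} = 1"
    and F_mean: "integrable F (\<lambda>x. x)" "(\<integral>x. x \<partial>F) = 1"
    and W_meas: "\<And>l. W l \<in> borel_measurable M"
    and W_distr: "\<And>l. distr M borel (W l) = F"
    and W_indep: "prob_space.indep_vars M (\<lambda>_. borel) W UNIV"
    and params: "\<alpha> > 0" "\<beta> > 0" "\<gamma> > 0"
    and ijk: "i \<ge> 1" "j \<ge> 1" "k \<ge> 1" "i \<noteq> j" "i \<noteq> k" "j \<noteq> k"
  defines "c \<equiv> \<lambda>n \<omega>. cond_clust n (num_groups \<alpha> \<beta> n)
                        (\<lambda>l. edge_prob \<alpha> \<gamma> n (W l \<omega>)) i j k"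
  shows "(\<alpha> < 1 \<longrightarrow> conv_in_prob M c (\<lambda>_. 1))
       \<and> (\<alpha> = 1 \<longrightarrow> conv_in_prob M c (\<lambda>\<omega>. 1 / (1 + \<beta> * \<gamma> * W k \<omega>)))
       \<and> (\<alpha> > 1 \<longrightarrow> conv_in_prob M c (\<lambda>_. 0))"
proof -
  interpret P: prob_space M by (rule M)
  have [measurable]: "W l \<in> borel_measurable M" for l by (rule W_meas)
  have Wpos: "AE \<omega> in M. W l \<omega> > 0" for l
  proof -
    interpret F: prob_space F by (rule F(1))
    have "AE x in F. x \<in> {0<..}" by (rule F.AE_prob_1) (use F(3) in simp)
    then have "AE x in distr M borel (W l). x > 0" unfolding W_distr[of l] by simp
    then show ?thesis by (rule AE_distrD[OF W_meas])
  qed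
  have cm: "c n \<in> borel_measurable M" for n
    unfolding c_def by (rule meas_cond_clust) (unfold edge_prob_def, measurable)
  have pw: "AE \<omega> in M. (\<alpha> < 1 \<longrightarrow> (\<lambda>n. c n \<omega>) \<longlonglongrightarrow> 1)
       \<and> (\<alpha> = 1 \<longrightarrow> (\<lambda>n. c n \<omega>) \<longlonglongrightarrow> 1 / (1 + \<beta> * \<gamma> * W k \<omega>))
       \<and> (\<alpha> > 1 \<longrightarrow> (\<lambda>n. c n \<omega>) \<longlonglongrightarrow> 0)"
    using Wpos[of i] Wpos[of j] Wpos[of k]
  proof eventually_elim
    case (elim \<omega>)
    interpret asy \<alpha> \<beta> \<gamma> "W i \<omega>" "W j \<omega>" "W k \<omega>"
      by unfold_locales (use elim params in auto)
    show ?case unfolding c_def by (rule pointwise[of i j k "\<lambda>l. W l \<omega>"]) (use ijk in auto)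
  qed
  show ?thesis
  proof (intro conjI impI)
    assume a: "\<alpha> < 1"
    show "conv_in_prob M c (\<lambda>_. 1)"
      by (rule ae_conv[OF M cm]) (use pw a in \<open>auto elim: eventually_mono\<close>)
  next
    assume a: "\<alpha> = 1"
    show "conv_in_prob M c (\<lambda>\<omega>. 1 / (1 + \<beta> * \<gamma> * W k \<omega>))"
      by (rule ae_conv[OF M cm]) (use pw a in \<open>auto elim: eventually_mono\<close>)
  next
    assume a: "\<alpha> > 1"
    show "conv_in_prob M c (\<lambda>_. 0)"
      by (rule ae_conv[OF M cm]) (use pw a in \<open>auto elim: eventually_mono\<close>)
  qed
qed

end
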